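(* Let $G=(U\cup W,E)$ be a finite bipartite graph with bipartition $(U,W)$. For every $\mathbf{I}\in\{0,1\}^{\vec E}$ with $\mathbf{I}=\mathcal{P}_G(\mathcal{P}_G(\mathbf{I}))$, the set $V(\mathbf{I})$ is a vertex cover of $G$.
   Context: $\vec E$: directed edges; $\partial v$: neighbours of $v$; empty sums are $0$. $\mathcal{P}_G:\{0,1\}^{\vec E}\to\{0,1\}^{\vec E}$, $\mathcal{P}_G(\mathbf{I})_{u\to v}=\mathbf{1}(\sum_{w\in\partial u\setminus v}I_{w\to u}=0)$. $V(\mathbf{I})$: for $u\in U$, $u\in V(\mathbf{I})$ iff $\sum_{v\in\partial u}I_{v\to u}\ge1$; for $w\in W$, $w\in V(\mathbf{I})$ iff $\sum_{v\in\partial w}\mathcal{P}_G(\mathbf{I})_{v\to w}\ge2$. *)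

theory Defs
  imports Main
begin

text \<open>An undirected edge {u,v}
  corresponds to the two directed edges (u,v) and (v,u).\<close>

definition bipartite_graph :: "'a set \<Rightarrow> 'a set \<Rightarrow> ('a \<times> 'a) set \<Rightarrow> bool" where
  "bipartite_graph U W E \<longleftrightarrow> finite U \<and> finite W \<and> U \<inter> W = {} \<and>
     E \<subseteq> (U \<times> W) \<union> (W \<times> U) \<and> sym E"

definition nbrs :: "('a \<times> 'a) set \<Rightarrow> 'a \<Rightarrow> 'a set" where
  "nbrs E v = {w. (w, v) \<in> E}"

text \<open>Messages I in {0,1}^(directed edges) are functions 'a \<times> 'a \<Rightarrow> nat; the value
  at (u,v) is I_{u\<rightarrow>v}.  Only values on E matter.\<close>
definition PG :: "('a \<times> 'a) set \<Rightarrow> ('a \<times> 'a \<Rightarrow> nat) \<Rightarrow> ('a \<times> 'a \<Rightarrow> nat)" where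
  "PG E I = (\<lambda>(u, v). if (\<Sum>w \<in> nbrs E u - {v}. I (w, u)) = 0 then 1 else 0)"

definition Vset :: "'a set \<Rightarrow> 'a set \<Rightarrow> ('a \<times> 'a) set \<Rightarrow> ('a \<times> 'a \<Rightarrow> nat) \<Rightarrow> 'a set" where
  "Vset U W E I =
     {u \<in> U. (\<Sum>v \<in> nbrs E u. I (v, u)) \<ge> 1} \<union>
     {w \<in> W. (\<Sum>v \<in> nbrs E w. PG E I (v, w)) \<ge> 2}"

definition vertex_cover :: "('a \<times> 'a) set \<Rightarrow> 'a set \<Rightarrow> bool" where
  "vertex_cover E C \<longleftrightarrow> (\<forall>(u, v) \<in> E. u \<in> C \<or> v \<in> C)"

end

theory Submission
  imports Defs
begin

lemma key:
  assumes bg: "bipartite_graph U W E"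
    and fp: "\<forall>e \<in> E. I e = PG E (PG E I) e"
    and uw: "(u, w) \<in> E" and uU: "u \<in> U" and wW: "w \<in> W"
    and nu: "u \<notin> Vset U W E I"
  shows "w \<in> Vset U W E I"
proof -
  have fin: "finite U" "finite W" and sub: "E \<subseteq> (U \<times> W) \<union> (W \<times> U)" and sy: "sym E"
    and dj: "U \<inter> W = {}"
    using bg by (auto simp: bipartite_graph_def)
  have wu: "(w, u) \<in> E" using sy uw by (meson symD)
  have nbu: "nbrs E u \<subseteq> W" using sub uU dj by (auto simp: nbrs_def)
  have nbw: "nbrs E w \<subseteq> U" using sub wW dj by (auto simp: nbrs_def)
  have finu: "finite (nbrs E u)" using nbu fin finite_subset by blast
  have finw: "finite (nbrs E w)" using nbw fin finite_subset by blast
  have s0: "(\<Sum>v \<in> nbrs E u. I (v, u)) = 0" using nu uU by (simp add: Vset_def)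
  hence z: "\<forall>v \<in> nbrs E u. I (v, u) = 0" using finu by simp
  have "w \<in> nbrs E u" using wu by (simp add: nbrs_def)
  hence Iwu: "I (w, u) = 0" using z by blast
  have "I (w, u) = PG E (PG E I) (w, u)" using fp wu by blast
  hence "(\<Sum>x \<in> nbrs E w - {u}. PG E I (x, w)) \<noteq> 0" using Iwu by (simp add: PG_def split: if_splits)
  then obtain x where x: "x \<in> nbrs E w - {u}" "PG E I (x, w) \<noteq> 0" by (meson sum.neutral)
  have px: "PG E I (x, w) = 1" using x(2) by (simp add: PG_def split: if_splits)
  have "(\<Sum>y \<in> nbrs E u - {w}. I (y, u)) = 0" using z by simp
  hence pu: "PG E I (u, w) = 1" by (simp add: PG_def)
  have un: "u \<in> nbrs E w" using uw by (simp add: nbrs_def)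
  have "(\<Sum>v \<in> {u, x}. PG E I (v, w)) \<le> (\<Sum>v \<in> nbrs E w. PG E I (v, w))"
    by (rule sum_mono2[OF finw]) (use un x in auto)
  moreover have "(\<Sum>v \<in> {u, x}. PG E I (v, w)) = 2" using x px pu by auto
  ultimately show ?thesis using wW by (simp add: Vset_def)
qed

theorem mainTheorem16:
  fixes U W :: "'a set" and E :: "('a \<times> 'a) set" and I :: "'a \<times> 'a \<Rightarrow> nat"
  assumes "bipartite_graph U W E"
    and "\<forall>e \<in> E. I e \<in> {0, 1}"
    and "\<forall>e \<in> E. I e = PG E (PG E I) e"
  shows "vertex_cover E (Vset U W E I)"
  unfolding vertex_cover_def
proof (intro ballI, clarify)
  fix a b assume ab: "(a, b) \<in> E" and nb: "b \<notin> Vset U W E I"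
  have sub: "E \<subseteq> (U \<times> W) \<union> (W \<times> U)" and sy: "sym E"
    using assms(1) by (auto simp: bipartite_graph_def)
  have ba: "(b, a) \<in> E" using sy ab by (meson symD)
  show "a \<in> Vset U W E I"
  proof (cases "a \<in> U \<and> b \<in> W")
    case True
    show ?thesis
    proof (rule ccontr)
      assume "a \<notin> Vset U W E I"
      with key[OF assms(1) assms(3) ab] True nb show False by blast
    qed
  next
    case False
    hence "b \<in> U" "a \<in> W" using sub ab by auto
    thus ?thesis using key[OF assms(1) assms(3) ba] nb by blast
  qed
qed

end
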